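(* Let $F$ be a distribution function on $[0,1]$ with a positive, non-increasing, differentiable density $g$ and non-decreasing hazard ratio $g(x)/(1-F(x))$. Let $\{f_{i,j}\}$, $f_{i,j}=f_{j,i}$ ($1\le i\le j\le n$), be independent with distribution $F$. Call $I\subseteq[n]$ a K-set if $f_{i,j}\ge (f_{i,i}+f_{j,j})/2$ for all distinct $i,j\in I$. Say $J\subseteq[n]$, $|J|\ge2$, supports a non-trivial local equilibrium if there exist $p_j>0$ ($j\in J$), $\sum_{j\in J}p_j=1$, such that $\sum_{j\in J}f_{i,j}p_j$ is constant in $i\in J$ and $\sum_{i,j\in J}f_{i,j}x_ix_j\le0$ whenever $\sum_{i\in J}x_i=0$. Fix $\varepsilon>0$ and let $r_n^*=\lceil(2/3+\varepsilon)\log_2 n\rceil$. Then with probability at least $1-\exp\bigl(-\Theta(\varepsilon\log^2 n)\bigr)$ there is no K-set $I$ of cardinality $\ge r_n^*$ such that no proper subset $J\subsetneq I$ with $|J|\ge2$ supports a non-trivial local equilibrium. *)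

theory Defs
  imports "HOL-Probability.Probability"
begin

text \<open>Players are indexed by [n] = {0..<n} (0-based). The independent payoffs
  f_{i,j} = f_{j,i} are indexed by the pairs (i,j) with i \<le> j < n.\<close>

definition pair_index :: "nat \<Rightarrow> (nat \<times> nat) set" where
  "pair_index n = {(i, j). i \<le> j \<and> j < n}"

definition payoff :: "(nat \<times> nat \<Rightarrow> real) \<Rightarrow> nat \<Rightarrow> nat \<Rightarrow> real" where
  "payoff \<omega> i j = \<omega> (min i j, max i j)"

definition dens_measure :: "(real \<Rightarrow> real) \<Rightarrow> real measure" where
  "dens_measure g = density lborel (\<lambda>x. ennreal (g x * indicator {0..1} x))"

definition sample_space :: "(real \<Rightarrow> real) \<Rightarrow> nat \<Rightarrow> (nat \<times> nat \<Rightarrow> real) measure" where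
  "sample_space g n = PiM (pair_index n) (\<lambda>_. dens_measure g)"

definition K_set :: "(nat \<Rightarrow> nat \<Rightarrow> real) \<Rightarrow> nat set \<Rightarrow> bool" where
  "K_set f I \<longleftrightarrow> (\<forall>i\<in>I. \<forall>j\<in>I. i \<noteq> j \<longrightarrow> f i j \<ge> (f i i + f j j) / 2)"

definition supports_nontrivial_local_eq :: "(nat \<Rightarrow> nat \<Rightarrow> real) \<Rightarrow> nat set \<Rightarrow> bool" where
  "supports_nontrivial_local_eq f J \<longleftrightarrow>
     card J \<ge> 2 \<and>
     (\<exists>p :: nat \<Rightarrow> real. (\<forall>j\<in>J. p j > 0) \<and> (\<Sum>j\<in>J. p j) = 1 \<and>
        (\<exists>v. \<forall>i\<in>J. (\<Sum>j\<in>J. f i j * p j) = v) \<and>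
        (\<forall>x :: nat \<Rightarrow> real. (\<Sum>i\<in>J. x i) = 0 \<longrightarrow>
            (\<Sum>i\<in>J. \<Sum>j\<in>J. f i j * x i * x j) \<le> 0))"

definition r_star :: "real \<Rightarrow> nat \<Rightarrow> nat" where
  "r_star \<epsilon> n = nat \<lceil>(2/3 + \<epsilon>) * log 2 (real n)\<rceil>"

definition bad_event :: "real \<Rightarrow> nat \<Rightarrow> (nat \<times> nat \<Rightarrow> real) \<Rightarrow> bool" where
  "bad_event \<epsilon> n \<omega> \<longleftrightarrow>
     (\<exists>I. I \<subseteq> {..<n} \<and> K_set (payoff \<omega>) I \<and> card I \<ge> r_star \<epsilon> n \<and>
        \<not> (\<exists>J. J \<subset> I \<and> card J \<ge> 2 \<and> supports_nontrivial_local_eq (payoff \<omega>) J))"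

end

theory Submission imports Defs "HOL-Computational_Algebra.Polynomial" begin



fun cheb :: "nat \<Rightarrow> real poly" where
  "cheb 0 = 1"
| "cheb (Suc 0) = [:0, 1:]"
| "cheb (Suc (Suc n)) = [:0, 2:] * cheb (Suc n) - cheb n"

lemma cheb_cos: "poly (cheb n) (cos t) = cos (real n * t)"
proof (induction n rule: cheb.induct)
  case (3 n)
  have e1: "cos (real (Suc (Suc n)) * t) = cos ((real (Suc n)) * t + t)" by (simp add: algebra_simps)
  have e2: "cos (real n * t) = cos ((real (Suc n)) * t - t)" by (simp add: algebra_simps)
  have "cos (real (Suc (Suc n)) * t) = 2 * cos t * cos (real (Suc n) * t) - cos (real n * t)"
    unfolding e1 e2 cos_add cos_diff by (simp add: algebra_simps)
  then show ?case using 3 by simp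
qed auto

lemma cheb_deg_lc: "degree (cheb n) = n \<and> coeff (cheb n) n = (if n = 0 then 1 else 2 ^ (n - 1))"
proof (induction n rule: cheb.induct)
  case (3 n)
  have d1: "degree ([:0, 2:] * cheb (Suc n)) = Suc (Suc n)"
    using 3 by (subst degree_mult_eq) auto
  have c1: "coeff ([:0, 2:] * cheb (Suc n)) (Suc (Suc n)) = 2 ^ Suc n"
    using 3 by simp
  have "degree (cheb n) < Suc (Suc n)" using 3 by simp
  then have dd: "degree ([:0, 2:] * cheb (Suc n) - cheb n) = Suc (Suc n)"
    using d1 degree_add_eq_left[of "- cheb n" "[:0, 2:] * cheb (Suc n)"] by simp
  have "coeff (cheb n) (Suc (Suc n)) = 0" using 3 by (simp add: coeff_eq_0)
  then show ?case using dd c1 by simp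
qed (auto simp: degree_pCons_eq)

lemma cheb_bound: "\<bar>x\<bar> \<le> 1 \<Longrightarrow> \<bar>poly (cheb n) x\<bar> \<le> 1"
  using cheb_cos[of n "arccos x"] by (simp add: cos_arccos_abs)

definition chq :: "nat \<Rightarrow> real poly" where "chq n = pcompose (cheb n) [:-1, 2:]"

lemma chq_bound: "0 \<le> y \<Longrightarrow> y \<le> 1 \<Longrightarrow> \<bar>poly (chq n) y\<bar> \<le> 1"
  unfolding chq_def by (auto simp: poly_pcompose intro!: cheb_bound)

lemma chq_deg: "degree (chq n) = n"
  unfolding chq_def by (simp add: degree_pcompose cheb_deg_lc)

lemma chq_lc: "n \<ge> 1 \<Longrightarrow> coeff (chq n) n = 2 ^ (2 * n - 1)"
proof -
  assume n: "n \<ge> 1"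
  have "lead_coeff (chq n) = lead_coeff (cheb n) * 2 ^ n"
    unfolding chq_def by (subst lead_coeff_comp) (auto simp: cheb_deg_lc)
  also have "\<dots> = 2 ^ (n - 1) * 2 ^ n" using n cheb_deg_lc[of n] by simp
  also have "\<dots> = 2 ^ (2 * n - 1)" using n by (simp add: power_add[symmetric])
  finally show ?thesis by (simp add: chq_deg)
qed

lemma lagrange_lc:
  fixes x :: "'a \<Rightarrow> real" and S :: "'a set" and p :: "real poly"
  assumes fin: "finite S" and inj: "inj_on x S" and deg: "degree p < card S"
  shows "(\<Sum>i\<in>S. poly p (x i) / (\<Prod>j\<in>S-{i}. (x i - x j))) = coeff p (card S - 1)"
proof -
  define c where "c i = poly p (x i) / (\<Prod>j\<in>S-{i}. (x i - x j))" for i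
  define B where "B i = (\<Prod>j\<in>S-{i}. [:- x j, 1:])" for i
  define L where "L = (\<Sum>i\<in>S. smult (c i) (B i))"
  have cS: "card S \<ge> 1" using deg by simp
  have degB: "degree (B i) = card S - 1" if "i \<in> S" for i
  proof -
    have "degree (B i) = (\<Sum>j\<in>S-{i}. degree [:- x j, 1:])"
      unfolding B_def by (rule degree_prod_sum_eq) auto
    also have "\<dots> = card (S - {i})" by simp
    finally show ?thesis using that fin by simp
  qed
  have lcB: "coeff (B i) (card S - 1) = 1" if "i \<in> S" for i
    using lead_coeff_prod[of "\<lambda>j. [:- x j, 1:]" "S - {i}"] degB[OF that] unfolding B_def by simp
  have polyB: "poly (B i) y = (\<Prod>j\<in>S-{i}. (y - x j))" for i y
    unfolding B_def by (simp add: poly_prod)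
  have nz: "(\<Prod>j\<in>S-{i}. (x i - x j)) \<noteq> 0" if "i \<in> S" for i
    using inj that fin by (auto simp: inj_on_def)
  have polyL: "poly L (x k) = poly p (x k)" if k: "k \<in> S" for k
  proof -
    have "poly L (x k) = (\<Sum>i\<in>S. c i * poly (B i) (x k))"
      unfolding L_def by (simp add: poly_sum)
    also have "\<dots> = c k * poly (B k) (x k) + (\<Sum>i\<in>S-{k}. c i * poly (B i) (x k))"
      using fin k by (simp add: sum.remove)
    also have "(\<Sum>i\<in>S-{k}. c i * poly (B i) (x k)) = 0"
    proof (rule sum.neutral, intro ballI)
      fix i assume i: "i \<in> S - {k}"
      then have "k \<in> S - {i}" using k by auto
      then have "(\<Prod>j\<in>S-{i}. (x k - x j)) = 0" using fin
        by (metis (no_types, lifting) cancel_comm_monoid_add_class.diff_cancel finite_Diff prod_zero_iff)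
      then show "c i * poly (B i) (x k) = 0" by (simp add: polyB)
    qed
    finally show ?thesis using nz[OF k] by (simp add: c_def polyB)
  qed
  have degL: "degree L \<le> card S - 1"
    unfolding L_def by (rule degree_sum_le) (auto intro: order.trans[OF degree_smult_le] simp: degB fin)
  have "p = L"
  proof (rule ccontr)
    assume "p \<noteq> L"
    then have ne: "p - L \<noteq> 0" by simp
    have "x ` S \<subseteq> {y. poly (p - L) y = 0}" using polyL by auto
    then have "card (x ` S) \<le> card {y. poly (p - L) y = 0}"
      using poly_roots_finite[OF ne] by (rule card_mono[rotated])
    also have "\<dots> \<le> degree (p - L)" by (rule card_poly_roots_bound[OF ne])
    also have "\<dots> \<le> card S - 1" using degL deg by (intro degree_diff_le) auto
    finally show False using card_image[OF inj] cS by simp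
  qed
  then have "coeff p (card S - 1) = (\<Sum>i\<in>S. c i * coeff (B i) (card S - 1))"
    by (simp add: L_def coeff_sum)
  also have "\<dots> = (\<Sum>i\<in>S. c i)" by (rule sum.cong) (simp_all add: lcB del: One_nat_def)
  finally show ?thesis by (simp add: c_def)
qed

definition wv :: "('a \<Rightarrow> real) \<Rightarrow> 'a set \<Rightarrow> 'a \<Rightarrow> real" where
  "wv x S i = (\<Prod>j\<in>S-{i}. \<bar>x i - x j\<bar>)"

definition Vd :: "('a \<Rightarrow> real) \<Rightarrow> 'a set \<Rightarrow> real" where
  "Vd x S = (\<Prod>i\<in>S. wv x S i)"

lemma wv_nonneg: "wv x S i \<ge> 0" unfolding wv_def by (simp add: prod_nonneg)
lemma Vd_nonneg: "Vd x S \<ge> 0" unfolding Vd_def by (simp add: prod_nonneg wv_nonneg)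

lemma Vd_remove:
  assumes fin: "finite S" and i: "i \<in> S"
  shows "Vd x S = Vd x (S - {i}) * (wv x S i)^2"
proof -
  have "Vd x S = wv x S i * (\<Prod>a\<in>S-{i}. wv x S a)"
    unfolding Vd_def using fin i by (simp add: prod.remove)
  also have "(\<Prod>a\<in>S-{i}. wv x S a) = (\<Prod>a\<in>S-{i}. \<bar>x a - x i\<bar> * wv x (S-{i}) a)"
  proof (rule prod.cong[OF refl])
    fix a assume a: "a \<in> S - {i}"
    have "S - {a} = insert i (S - {i} - {a})" using a i by auto
    then show "wv x S a = \<bar>x a - x i\<bar> * wv x (S-{i}) a"
      unfolding wv_def using fin by (simp add: prod.insert)
  qed
  also have "\<dots> = (\<Prod>a\<in>S-{i}. \<bar>x a - x i\<bar>) * Vd x (S-{i})"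
    unfolding Vd_def by (simp add: prod.distrib)
  also have "(\<Prod>a\<in>S-{i}. \<bar>x a - x i\<bar>) = wv x S i"
    unfolding wv_def by (simp add: abs_minus_commute)
  finally show ?thesis by (simp add: power2_eq_square)
qed

lemma sum_inv_w:
  assumes fin: "finite S" and inj: "inj_on x S" and m: "card S \<ge> 2"
    and rng: "\<And>i. i \<in> S \<Longrightarrow> 0 \<le> x i \<and> x i \<le> 1"
  shows "2 ^ (2 * card S - 3) \<le> (\<Sum>i\<in>S. 1 / wv x S i)"
proof -
  let ?m = "card S"
  have "(\<Sum>i\<in>S. poly (chq (?m - 1)) (x i) / (\<Prod>j\<in>S-{i}. (x i - x j))) = coeff (chq (?m - 1)) (?m - 1)"
    using m by (intro lagrange_lc fin inj) (simp add: chq_deg)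
  also have "\<dots> = 2 ^ (2 * ?m - 3)" using m by (simp add: chq_lc)
  finally have eq: "(\<Sum>i\<in>S. poly (chq (?m - 1)) (x i) / (\<Prod>j\<in>S-{i}. (x i - x j))) = 2 ^ (2 * ?m - 3)" .
  have "(2::real) ^ (2 * ?m - 3) \<le> (\<Sum>i\<in>S. \<bar>poly (chq (?m - 1)) (x i) / (\<Prod>j\<in>S-{i}. (x i - x j))\<bar>)"
    unfolding eq[symmetric] by (rule order.trans[OF abs_ge_self sum_abs])
  also have "\<dots> \<le> (\<Sum>i\<in>S. 1 / wv x S i)"
  proof (rule sum_mono)
    fix i assume i: "i \<in> S"
    have "\<bar>\<Prod>j\<in>S-{i}. (x i - x j)\<bar> = wv x S i" unfolding wv_def by (simp add: abs_prod)
    moreover have "\<bar>poly (chq (?m - 1)) (x i)\<bar> \<le> 1" using rng[OF i] chq_bound by auto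
    ultimately show "\<bar>poly (chq (?m - 1)) (x i) / (\<Prod>j\<in>S-{i}. (x i - x j))\<bar> \<le> 1 / wv x S i"
      by (simp add: abs_divide divide_right_mono wv_nonneg)
  qed
  finally show ?thesis .
qed

lemma Vd_bound_aux:
  "\<forall>S. finite S \<longrightarrow> card S = m \<longrightarrow> (\<forall>i\<in>S. 0 \<le> x i \<and> x i \<le> 1) \<longrightarrow>
     Vd x S \<le> (fact m)^2 / 4 ^ ((m - 1)^2)"
proof (induction m)
  case 0
  then show ?case by (simp add: Vd_def)
next
  case (Suc k)
  show ?case
  proof (intro allI impI)
    fix S :: "'a set" assume fin: "finite S" and cS: "card S = Suc k" and rng: "\<forall>i\<in>S. 0 \<le> x i \<and> x i \<le> 1"
    show "Vd x S \<le> (fact (Suc k))^2 / 4 ^ ((Suc k - 1)^2)"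
    proof (cases "k = 0")
      case True
      then obtain a where "S = {a}" using cS card_1_singletonE by auto
      then show ?thesis using True by (simp add: Vd_def wv_def)
    next
      case False
      show ?thesis
      proof (cases "inj_on x S")
        case False
        then obtain i j where ij: "i \<in> S" "j \<in> S" "i \<noteq> j" "x i = x j" by (auto simp: inj_on_def)
        have "wv x S i = 0" unfolding wv_def using fin ij by (intro prod_zero) auto
        then have "Vd x S = 0" unfolding Vd_def using fin ij by (intro prod_zero) auto
        then show ?thesis by simp
      next
        case True
        have ne: "S \<noteq> {}" using cS by auto
        have wpos: "wv x S j > 0" if "j \<in> S" for j
          unfolding wv_def using True that fin by (intro prod_pos) (auto simp: inj_on_def)
        have "Min (wv x S ` S) \<in> wv x S ` S" using fin ne by (intro Min_in) auto
        then obtain i where i: "i \<in> S" "wv x S i = Min (wv x S ` S)" by (metis imageE)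
        have imin: "wv x S i \<le> wv x S j" if "j \<in> S" for j
          using i fin that by auto
        have "(2::real) ^ (2 * card S - 3) \<le> (\<Sum>j\<in>S. 1 / wv x S j)"
          using \<open>k \<noteq> 0\<close> cS rng by (intro sum_inv_w fin True) auto
        also have "\<dots> \<le> (\<Sum>j\<in>S. 1 / wv x S i)"
          by (intro sum_mono divide_left_mono imin wpos mult_pos_pos i) auto
        also have "\<dots> = card S / wv x S i" by simp
        finally have "(2::real) ^ (2 * card S - 3) \<le> card S / wv x S i" .
        then have wb: "wv x S i \<le> card S / 2 ^ (2 * card S - 3)"
          using wpos[OF i(1)] by (simp add: field_simps)
        have IH: "Vd x (S - {i}) \<le> (fact k)^2 / 4 ^ ((k - 1)^2)"
          using Suc.IH fin cS rng i by auto
        have "Vd x S = Vd x (S - {i}) * (wv x S i)^2" by (rule Vd_remove[OF fin i(1)])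
        also have "\<dots> \<le> ((fact k)^2 / 4 ^ ((k - 1)^2)) * (card S / 2 ^ (2 * card S - 3))^2"
          by (intro mult_mono IH power_mono wb wv_nonneg) auto
        also have "\<dots> = (fact (Suc k))^2 / 4 ^ ((Suc k - 1)^2)"
        proof -
          have e: "(k - 1)^2 + (2 * Suc k - 3) = k^2" 
          proof -
            obtain j where "k = Suc j" using \<open>k \<noteq> 0\<close> not0_implies_Suc by blast
            then show ?thesis by (simp add: power2_eq_square)
          qed
          have "(2::real) ^ (2 * card S - 3) * 2 ^ (2 * card S - 3) = 4 ^ (2 * Suc k - 3)"
            using cS by (simp add: power_mult_distrib[symmetric])
          moreover have "(4::real) ^ ((k - 1)^2) * 4 ^ (2 * Suc k - 3) = 4 ^ (k^2)"
            by (subst power_add[symmetric]) (simp only: e)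
          ultimately show ?thesis using cS
            by (simp add: power2_eq_square field_simps)
        qed
        finally show ?thesis .
      qed
    qed
  qed
qed

lemma Vd_bound:
  assumes "finite S" "\<And>i. i \<in> S \<Longrightarrow> 0 \<le> x i \<and> x i \<le> 1"
  shows "Vd x S \<le> (fact (card S))^2 / 4 ^ ((card S - 1)^2)"
  using Vd_bound_aux[of "card S" x] assms by auto

definition Opairs :: "nat set \<Rightarrow> (nat \<times> nat) set" where
  "Opairs I = {(i, j). i \<in> I \<and> j \<in> I \<and> i < j}"

lemma Opairs_finite: "finite I \<Longrightarrow> finite (Opairs I)"
  unfolding Opairs_def by (rule finite_subset[of _ "I \<times> I"]) auto

lemma prod_pairs_sq:
  fixes a :: "nat \<Rightarrow> nat \<Rightarrow> real"
  assumes fin: "finite I" and sym: "\<And>i j. a i j = a j i"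
  shows "(\<Prod>p\<in>Opairs I. a (fst p) (snd p))^2 = (\<Prod>i\<in>I. \<Prod>j\<in>I-{i}. a i j)"
proof -
  have "(\<Prod>i\<in>I. \<Prod>j\<in>I-{i}. a i j) = (\<Prod>p\<in>Sigma I (\<lambda>i. I-{i}). a (fst p) (snd p))"
    using fin by (subst prod.Sigma) (auto simp: case_prod_beta)
  also have "Sigma I (\<lambda>i. I-{i}) = Opairs I \<union> prod.swap ` Opairs I"
    unfolding Opairs_def by (auto simp: image_iff)
  also have "(\<Prod>p\<in>Opairs I \<union> prod.swap ` Opairs I. a (fst p) (snd p))
      = (\<Prod>p\<in>Opairs I. a (fst p) (snd p)) * (\<Prod>p\<in>prod.swap ` Opairs I. a (fst p) (snd p))"
    using fin Opairs_finite[OF fin] by (intro prod.union_disjoint) (auto simp: Opairs_def)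
  also have "(\<Prod>p\<in>prod.swap ` Opairs I. a (fst p) (snd p)) = (\<Prod>p\<in>Opairs I. a (snd p) (fst p))"
    by (subst prod.reindex) (auto simp: inj_on_def)
  also have "\<dots> = (\<Prod>p\<in>Opairs I. a (fst p) (snd p))" by (simp add: sym)
  finally show ?thesis by (simp add: power2_eq_square)
qed

lemma four_pow: "(4::real) ^ k = (2 ^ k)^2"
  by (simp add: power2_eq_square power_mult_distrib[symmetric])

lemma pair_prod_bound:
  fixes u :: "nat \<Rightarrow> real"
  assumes fin: "finite I" and rng: "\<And>i. i \<in> I \<Longrightarrow> 0 \<le> u i \<and> u i \<le> 1"
  shows "(\<Prod>p\<in>Opairs I. \<bar>u (fst p) - u (snd p)\<bar> / 2)
     \<le> fact (card I) / (2 ^ ((card I - 1)^2) * 2 ^ (card I * (card I - 1) div 2))"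
proof -
  let ?r = "card I"
  let ?P = "(\<Prod>p\<in>Opairs I. \<bar>u (fst p) - u (snd p)\<bar> / 2)"
  have "?P^2 = (\<Prod>i\<in>I. \<Prod>j\<in>I-{i}. \<bar>u i - u j\<bar> / 2)"
    using fin by (intro prod_pairs_sq) (simp_all add: abs_minus_commute)
  also have "\<dots> = (\<Prod>i\<in>I. (1/2)^(?r - 1) * wv u I i)"
  proof (rule prod.cong[OF refl])
    fix i assume i: "i \<in> I"
    have "(\<Prod>j\<in>I-{i}. \<bar>u i - u j\<bar> / 2) = (\<Prod>j\<in>I-{i}. (1/2) * \<bar>u i - u j\<bar>)"
      by (rule prod.cong) simp_all
    also have "\<dots> = (\<Prod>j\<in>I-{i}. (1/2::real)) * wv u I i" unfolding wv_def by (rule prod.distrib)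
    also have "(\<Prod>j\<in>I-{i}. (1/2::real)) = (1/2)^card (I-{i})" by simp
    finally show "(\<Prod>j\<in>I-{i}. \<bar>u i - u j\<bar> / 2) = (1/2)^(?r - 1) * wv u I i" using i fin by simp
  qed
  also have "\<dots> = (1/2)^(?r * (?r - 1)) * Vd u I"
    unfolding Vd_def by (simp add: prod.distrib power_mult[symmetric] mult.commute)
  also have "\<dots> \<le> (1/2)^(?r * (?r - 1)) * ((fact ?r)^2 / 4 ^ ((?r - 1)^2))"
    by (intro mult_left_mono Vd_bound fin rng) auto
  also have "\<dots> = (fact ?r / (2 ^ ((?r - 1)^2) * 2 ^ (?r * (?r - 1) div 2)))^2"
  proof -
    define k where "k = ?r * (?r - 1) div 2"
    have "even (?r * (?r - 1))" by (cases ?r) auto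
    then have ev: "?r * (?r - 1) = 2 * k" unfolding k_def by simp
    have A: "(1/2::real) ^ (?r * (?r - 1)) = 1 / (2 ^ k)^2"
      unfolding ev by (simp add: power_mult power_one_over four_pow)
    have B: "(4::real) ^ ((?r - 1)^2) = (2 ^ ((?r - 1)^2))^2"
      by (rule four_pow)
    show ?thesis unfolding A B k_def[symmetric] by (simp add: power_divide power_mult_distrib)
  qed
  finally have sq: "?P^2 \<le> (fact ?r / (2 ^ ((?r - 1)^2) * 2 ^ (?r * (?r - 1) div 2)))^2" .
  show ?thesis by (rule power2_le_imp_le[OF sq]) simp
qed



lemma cont_coord2: "continuous_on UNIV (\<lambda>f::nat \<Rightarrow> nat \<Rightarrow> real. f i j)"
  by (rule continuous_on_product_then_coordinatewise) (rule continuous_on_product_coordinates)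

lemma cont_sum1: "continuous_on UNIV (\<lambda>p::nat \<Rightarrow> real. \<Sum>j\<in>J. p j)"
  by (rule continuous_on_sum) (rule continuous_on_product_coordinates)

definition Kb :: "nat set \<Rightarrow> nat \<Rightarrow> (nat \<Rightarrow> real) set" where
  "Kb J m = PiE UNIV (\<lambda>j. if j \<in> J then {1/(real m+1)..1} else {0}) \<inter> {p. (\<Sum>j\<in>J. p j) = 1}"

lemma compact_Kb: "compact (Kb J m)"
proof -
  have "compactin (product_topology (\<lambda>_. euclidean) UNIV)
          (PiE UNIV (\<lambda>j. if j \<in> J then {1/(real m+1)..1::real} else {0}))"
    by (subst compactin_PiE) (auto simp: compactin_euclidean_iff)
  then have c1: "compact (PiE UNIV (\<lambda>j. if j \<in> J then {1/(real m+1)..1::real} else {0}))"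
    by (simp add: euclidean_product_topology compactin_euclidean_iff)
  have c2: "closed {p::nat \<Rightarrow> real. (\<Sum>j\<in>J. p j) = 1}"
    by (rule closed_Collect_eq[OF cont_sum1 continuous_on_const])
  show ?thesis unfolding Kb_def using c1 c2 by (rule compact_Int_closed)
qed

definition Tc :: "nat set \<Rightarrow> ((nat \<Rightarrow> real) \<times> (nat \<Rightarrow> nat \<Rightarrow> real)) set" where
  "Tc J = {z. \<forall>i\<in>J. \<forall>i'\<in>J. (\<Sum>j\<in>J. snd z i j * fst z j) = (\<Sum>j\<in>J. snd z i' j * fst z j)}"

lemma cont_snd2: "continuous_on UNIV (\<lambda>z::(nat \<Rightarrow> real) \<times> (nat \<Rightarrow> nat \<Rightarrow> real). snd z i j)"
  apply (rule continuous_on_product_then_coordinatewise)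
  apply (rule continuous_on_product_then_coordinatewise)
  apply (rule continuous_on_snd)
  apply (rule continuous_on_id)
  done

lemma cont_fst1: "continuous_on UNIV (\<lambda>z::(nat \<Rightarrow> real) \<times> (nat \<Rightarrow> nat \<Rightarrow> real). fst z j)"
  apply (rule continuous_on_product_then_coordinatewise)
  apply (rule continuous_on_fst)
  apply (rule continuous_on_id)
  done

lemma cont_Tterm: "continuous_on UNIV (\<lambda>z::(nat \<Rightarrow> real) \<times> (nat \<Rightarrow> nat \<Rightarrow> real). \<Sum>j\<in>J. snd z i j * fst z j)"
  apply (rule continuous_on_sum)
  apply (rule continuous_on_mult[OF cont_snd2 cont_fst1])
  done

lemma cont_Qterm: "continuous_on UNIV (\<lambda>f::nat \<Rightarrow> nat \<Rightarrow> real. \<Sum>i\<in>J. \<Sum>j\<in>J. f i j * x i * x j)"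
  apply (rule continuous_on_sum)
  apply (rule continuous_on_sum)
  apply (rule continuous_on_mult[OF continuous_on_mult[OF cont_coord2 continuous_on_const] continuous_on_const])
  done

lemma closed_Tc: "closed (Tc J)"
proof -
  have "Tc J = (\<Inter>i\<in>J. \<Inter>i'\<in>J. {z. (\<Sum>j\<in>J. snd z i j * fst z j) = (\<Sum>j\<in>J. snd z i' j * fst z j)})"
    unfolding Tc_def by auto
  also have "closed \<dots>"
    by (intro closed_INT ballI closed_Collect_eq[OF cont_Tterm cont_Tterm])
  finally show ?thesis .
qed

definition Cm :: "nat set \<Rightarrow> nat \<Rightarrow> (nat \<Rightarrow> nat \<Rightarrow> real) set" where
  "Cm J m = snd ` (Tc J \<inter> (Kb J m \<times> UNIV))"

lemma closed_Cm: "closed (Cm J m)"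
proof -
  have cs: "compact_space (subtopology euclidean (Kb J m))"
    by (rule compact_space_subtopology) (simp add: compactin_euclidean_iff compact_Kb)
  have cm: "closed_map (prod_topology (subtopology euclidean (Kb J m)) (euclidean :: (nat \<Rightarrow> nat \<Rightarrow> real) topology)) euclidean snd"
    by (rule closed_map_snd[OF cs])
  have eq: "prod_topology (subtopology euclidean (Kb J m)) (euclidean :: (nat \<Rightarrow> nat \<Rightarrow> real) topology)
      = subtopology euclidean (Kb J m \<times> UNIV)"
    using subtopology_Times[of "euclidean :: (nat \<Rightarrow> real) topology" "euclidean :: (nat \<Rightarrow> nat \<Rightarrow> real) topology" "Kb J m" UNIV]
    by (simp add: prod_topology_euclidean)
  have "closedin (subtopology euclidean (Kb J m \<times> UNIV)) (Tc J \<inter> (Kb J m \<times> UNIV))"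
    using closedin_closed_Int[OF closed_Tc, of "Kb J m \<times> UNIV"] by (simp add: Int_commute)
  then have "closedin euclidean (snd ` (Tc J \<inter> (Kb J m \<times> UNIV)))"
    by (rule cm[unfolded closed_map_def eq, rule_format])
  then have "closedin euclidean (Cm J m)" unfolding Cm_def .
  then show ?thesis by simp
qed

definition Qs :: "nat set \<Rightarrow> (nat \<Rightarrow> nat \<Rightarrow> real) set" where
  "Qs J = {f. \<forall>x :: nat \<Rightarrow> real. (\<Sum>i\<in>J. x i) = 0 \<longrightarrow> (\<Sum>i\<in>J. \<Sum>j\<in>J. f i j * x i * x j) \<le> 0}"

lemma closed_Qs: "closed (Qs J)"
proof -
  have "Qs J = (\<Inter>x\<in>{x :: nat \<Rightarrow> real. (\<Sum>i\<in>J. x i) = 0}. {f. (\<Sum>i\<in>J. \<Sum>j\<in>J. f i j * x i * x j) \<le> 0})"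
    unfolding Qs_def by auto
  also have "closed \<dots>"
    by (intro closed_INT ballI closed_Collect_le[OF cont_Qterm continuous_on_const])
  finally show ?thesis .
qed

lemma P1_iff:
  assumes fin: "finite J" and c2: "card J \<ge> 2"
  shows "(\<exists>p :: nat \<Rightarrow> real. (\<forall>j\<in>J. p j > 0) \<and> (\<Sum>j\<in>J. p j) = 1 \<and>
        (\<exists>v. \<forall>i\<in>J. (\<Sum>j\<in>J. f i j * p j) = v)) \<longleftrightarrow> (\<exists>m. f \<in> Cm J m)"
proof
  assume "\<exists>p :: nat \<Rightarrow> real. (\<forall>j\<in>J. p j > 0) \<and> (\<Sum>j\<in>J. p j) = 1 \<and>
        (\<exists>v. \<forall>i\<in>J. (\<Sum>j\<in>J. f i j * p j) = v)"
  then obtain p v where pp: "\<forall>j\<in>J. p j > 0" and ps: "(\<Sum>j\<in>J. p j) = 1"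
    and pv: "\<forall>i\<in>J. (\<Sum>j\<in>J. f i j * p j) = v" by blast
  have ne: "J \<noteq> {}" using c2 by auto
  define mu where "mu = Min (p ` J)"
  have mupos: "mu > 0" unfolding mu_def using fin ne pp by (subst Min_gr_iff) auto
  have mule: "mu \<le> p j" if "j \<in> J" for j unfolding mu_def using fin that by auto
  define m where "m = nat \<lceil>1 / mu\<rceil>"
  have "1 / mu \<le> real m" unfolding m_def by linarith
  then have "1 / (real m + 1) \<le> mu" using mupos by (simp add: field_simps)
  then have lb: "1 / (real m + 1) \<le> p j" if "j \<in> J" for j using mule[OF that] by linarith
  have ub: "p j \<le> 1" if "j \<in> J" for j
  proof -
    have "p j \<le> (\<Sum>k\<in>J. p k)"
    proof (rule member_le_sum)
      fix x assume "x \<in> J - {j}" then show "0 \<le> p x" using pp by (auto intro: less_imp_le)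
    qed (use that fin in auto)
    then show ?thesis using ps by simp
  qed
  define p' where "p' j = (if j \<in> J then p j else 0)" for j
  have s1: "p' \<in> PiE UNIV (\<lambda>j. if j \<in> J then {1/(real m+1)..1} else {0})"
    by (rule PiE_I) (auto simp: p'_def lb ub)
  have s2: "(\<Sum>j\<in>J. p' j) = (\<Sum>j\<in>J. p j)" unfolding p'_def by (rule sum.cong) auto
  have "p' \<in> Kb J m" unfolding Kb_def using s1 s2 ps by simp
  moreover have "(p', f) \<in> Tc J"
  proof -
    have "(\<Sum>j\<in>J. f i j * p' j) = (\<Sum>j\<in>J. f i j * p j)" for i unfolding p'_def by (rule sum.cong) auto
    then show ?thesis unfolding Tc_def using pv by simp
  qed
  ultimately have "(p', f) \<in> Tc J \<inter> (Kb J m \<times> UNIV)" by simp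
  then have "snd (p', f) \<in> Cm J m" unfolding Cm_def by (rule imageI)
  then have "f \<in> Cm J m" by simp
  then show "\<exists>m. f \<in> Cm J m" by blast
next
  assume "\<exists>m. f \<in> Cm J m"
  then obtain m p where pK: "p \<in> Kb J m" and pT: "(p, f) \<in> Tc J" unfolding Cm_def by auto
  have ne: "J \<noteq> {}" using c2 by auto
  then obtain i0 where i0: "i0 \<in> J" by auto
  have "\<forall>j\<in>J. p j > 0"
  proof
    fix j assume "j \<in> J"
    have "p \<in> PiE UNIV (\<lambda>j. if j \<in> J then {1/(real m+1)..1} else {0})" using pK unfolding Kb_def by (rule IntD1)
    then have "p j \<in> (if j \<in> J then {1/(real m+1)..1} else {0})" by (rule PiE_mem) simp
    then have "1 / (real m + 1) \<le> p j" using \<open>j \<in> J\<close> by simp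
    moreover have "0 < 1 / (real m + 1)" by simp
    ultimately show "p j > 0" by linarith
  qed
  moreover have "(\<Sum>j\<in>J. p j) = 1" using pK unfolding Kb_def by (rule IntD2[THEN CollectD])
  moreover have "\<forall>i\<in>J. (\<Sum>j\<in>J. f i j * p j) = (\<Sum>j\<in>J. f i0 j * p j)"
  proof
    fix i assume "i \<in> J"
    have "\<forall>i\<in>J. \<forall>i'\<in>J. (\<Sum>j\<in>J. snd (p, f) i j * fst (p, f) j) = (\<Sum>j\<in>J. snd (p, f) i' j * fst (p, f) j)"
      using pT unfolding Tc_def by (rule CollectD)
    then have "\<forall>i\<in>J. \<forall>i'\<in>J. (\<Sum>j\<in>J. f i j * p j) = (\<Sum>j\<in>J. f i' j * p j)"
      by (simp only: fst_conv snd_conv)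
    then show "(\<Sum>j\<in>J. f i j * p j) = (\<Sum>j\<in>J. f i0 j * p j)" using \<open>i \<in> J\<close> i0 by blast
  qed
  ultimately show "\<exists>p :: nat \<Rightarrow> real. (\<forall>j\<in>J. p j > 0) \<and> (\<Sum>j\<in>J. p j) = 1 \<and>
        (\<exists>v. \<forall>i\<in>J. (\<Sum>j\<in>J. f i j * p j) = v)" by blast
qed

lemma supports_borel:
  assumes fin: "finite J"
  shows "{f. supports_nontrivial_local_eq f J} \<in> sets borel"
proof (cases "card J \<ge> 2")
  case True
  have "f \<in> {f. supports_nontrivial_local_eq f J} \<longleftrightarrow> f \<in> (\<Union>m. Cm J m) \<inter> Qs J" for f
    using P1_iff[OF fin True, of f] True unfolding supports_nontrivial_local_eq_def Qs_def by auto
  then have "{f. supports_nontrivial_local_eq f J} = (\<Union>m. Cm J m) \<inter> Qs J" by blast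
  also have "\<dots> \<in> sets borel"
    using closed_Cm closed_Qs by (intro sets.Int sets.countable_UN borel_closed) auto
  finally show ?thesis .
next
  case False
  then have "{f. supports_nontrivial_local_eq f J} = {}"
    unfolding supports_nontrivial_local_eq_def by auto
  then show ?thesis by simp
qed

lemma coord_meas: "(\<lambda>\<omega>. \<omega> k) \<in> borel_measurable (sample_space g n)"
proof (cases "k \<in> pair_index n")
  case True
  have "(\<lambda>x. x k) \<in> sample_space g n \<rightarrow>\<^sub>M dens_measure g"
    unfolding sample_space_def by (rule measurable_component_singleton[OF True])
  moreover have "(sample_space g n \<rightarrow>\<^sub>M dens_measure g) = (sample_space g n \<rightarrow>\<^sub>M borel)"
    by (rule measurable_cong_sets) (simp_all add: dens_measure_def)
  ultimately show ?thesis by simp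
next
  case False
  have "(\<lambda>\<omega>. undefined :: real) \<in> borel_measurable (sample_space g n)" by simp
  moreover have "\<omega> k = undefined" if "\<omega> \<in> space (sample_space g n)" for \<omega>
    using that False unfolding sample_space_def by (cases k) (auto simp: space_PiM PiE_def extensional_def)
  ultimately show ?thesis using measurable_cong[of "sample_space g n" "\<lambda>\<omega>. \<omega> k" "\<lambda>\<omega>. undefined"] by simp
qed

lemma payoff_meas: "payoff \<in> sample_space g n \<rightarrow>\<^sub>M (borel :: (nat \<Rightarrow> nat \<Rightarrow> real) measure)"
proof -
  have inner: "(\<lambda>\<omega>. payoff \<omega> i) \<in> sample_space g n \<rightarrow>\<^sub>M (borel :: (nat \<Rightarrow> real) measure)" for i
  proof -
    have "(\<lambda>\<omega> j. payoff \<omega> i j) \<in> sample_space g n \<rightarrow>\<^sub>M PiM UNIV (\<lambda>_. (borel :: real measure))"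
      by (rule measurable_PiM_single') (auto simp: payoff_def coord_meas)
    moreover have "(sample_space g n \<rightarrow>\<^sub>M (borel :: (nat \<Rightarrow> real) measure)) = (sample_space g n \<rightarrow>\<^sub>M PiM UNIV (\<lambda>_. (borel :: real measure)))"
      by (rule measurable_cong_sets[OF refl sets_PiM_equal_borel[symmetric]])
    ultimately show ?thesis by simp
  qed
  have "(\<lambda>\<omega> i. payoff \<omega> i) \<in> sample_space g n \<rightarrow>\<^sub>M PiM UNIV (\<lambda>_. (borel :: (nat \<Rightarrow> real) measure))"
    by (rule measurable_PiM_single') (auto simp: inner)
  moreover have "(sample_space g n \<rightarrow>\<^sub>M (borel :: (nat \<Rightarrow> nat \<Rightarrow> real) measure)) = (sample_space g n \<rightarrow>\<^sub>M PiM UNIV (\<lambda>_. (borel :: (nat \<Rightarrow> real) measure)))"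
    by (rule measurable_cong_sets[OF refl sets_PiM_equal_borel[symmetric]])
  ultimately show ?thesis by simp
qed

lemma supports_pred:
  assumes "finite J"
  shows "Measurable.pred (sample_space g n) (\<lambda>\<omega>. supports_nontrivial_local_eq (payoff \<omega>) J)"
  using pred_sets2[OF supports_borel[OF assms] payoff_meas] by simp

lemma payoff_coord_meas[measurable]: "(\<lambda>\<omega>. payoff \<omega> i j) \<in> borel_measurable (sample_space g n)"
  unfolding payoff_def by (rule coord_meas)

lemma Kset_pred:
  assumes "finite I"
  shows "Measurable.pred (sample_space g n) (\<lambda>\<omega>. K_set (payoff \<omega>) I)"
  unfolding K_set_def
  apply (rule pred_intros_finite(3)[OF assms])
  apply (rule pred_intros_finite(3)[OF assms])
  apply (rule pred_intros_imp')
  unfolding pred_def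
  apply (rule borel_measurable_le)
  apply (intro borel_measurable_divide borel_measurable_add payoff_coord_meas borel_measurable_const)
  apply (rule payoff_coord_meas)
  done

lemma bad_meas:
  "{\<omega> \<in> space (sample_space g n). bad_event \<epsilon> n \<omega>} \<in> sets (sample_space g n)"
proof -
  have eq: "bad_event \<epsilon> n \<omega> \<longleftrightarrow> (\<exists>I\<in>Pow {..<n}. K_set (payoff \<omega>) I \<and> r_star \<epsilon> n \<le> card I \<and>
      (\<forall>J\<in>Pow I. J \<noteq> I \<longrightarrow> \<not> (2 \<le> card J \<and> supports_nontrivial_local_eq (payoff \<omega>) J)))" for \<omega>
    unfolding bad_event_def Bex_def Ball_def Pow_iff psubset_eq by (intro ex_cong1) auto
  have fI: "finite I" if "I \<in> Pow {..<n}" for I using that finite_subset by auto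
  have fJ: "finite J" if "I \<in> Pow {..<n}" "J \<in> Pow I" for I J
    using that by (metis PowD finite_lessThan finite_subset order_trans)
  have "Measurable.pred (sample_space g n) (\<lambda>\<omega>. \<exists>I\<in>Pow {..<n}. K_set (payoff \<omega>) I \<and> r_star \<epsilon> n \<le> card I \<and>
      (\<forall>J\<in>Pow I. J \<noteq> I \<longrightarrow> \<not> (2 \<le> card J \<and> supports_nontrivial_local_eq (payoff \<omega>) J)))"
  proof (rule pred_intros_finite(4), simp)
    fix I assume I: "I \<in> Pow {..<n}"
    have p1: "Measurable.pred (sample_space g n) (\<lambda>\<omega>. K_set (payoff \<omega>) I)" using fI[OF I] by (rule Kset_pred)
    have p2: "Measurable.pred (sample_space g n) (\<lambda>\<omega>. \<forall>J\<in>Pow I. J \<noteq> I \<longrightarrow> \<not> (2 \<le> card J \<and> supports_nontrivial_local_eq (payoff \<omega>) J))"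
    proof (rule pred_intros_finite(3))
      show "finite (Pow I)" using fI[OF I] by simp
    next
      fix J assume J: "J \<in> Pow I"
      show "Measurable.pred (sample_space g n) (\<lambda>\<omega>. J \<noteq> I \<longrightarrow> \<not> (2 \<le> card J \<and> supports_nontrivial_local_eq (payoff \<omega>) J))"
        by (intro pred_intros_imp' pred_intros_logic(2) pred_intros_conj1' supports_pred fJ[OF I J])
    qed
    show "Measurable.pred (sample_space g n) (\<lambda>\<omega>. K_set (payoff \<omega>) I \<and> r_star \<epsilon> n \<le> card I \<and>
      (\<forall>J\<in>Pow I. J \<noteq> I \<longrightarrow> \<not> (2 \<le> card J \<and> supports_nontrivial_local_eq (payoff \<omega>) J)))"
      using p1 p2 by (intro pred_intros_logic(3) pred_intros_conj1')
  qed
  then have "Measurable.pred (sample_space g n) (bad_event \<epsilon> n)" unfolding eq[abs_def] .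
  then show ?thesis unfolding pred_def .
qed





lemma asym_arith:
  fixes r L q d :: real
  assumes d: "d > 0" and q: "q = 3/2 - d" and qpos: "q > 0" and L0: "0 \<le> L" and Lq: "L \<le> q * r"
    and r5: "r \<ge> 5 / d" and r3: "r \<ge> 3"
  shows "r * L + (d / (9/2)) * L^2 \<le> (r - 1)^2 + r * (r - 1) / 2"
proof -
  have r0: "r \<ge> 0" using r3 by simp
  have h1: "r * L \<le> q * r^2" using mult_left_mono[OF Lq r0] by (simp add: power2_eq_square algebra_simps)
  have "L^2 \<le> (q * r)^2" using L0 Lq by (intro power_mono) auto
  also have "\<dots> = q^2 * r^2" by (simp add: power_mult_distrib)
  also have "\<dots> \<le> (9/4) * r^2"
  proof (intro mult_right_mono)
    have "q \<le> 3/2" using q d by simp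
    then have "q^2 \<le> (3/2)^2" using qpos by (intro power_mono) auto
    then show "q^2 \<le> 9/4" by (simp add: power2_eq_square)
  qed simp
  finally have h2: "L^2 \<le> (9/4) * r^2" .
  have h3: "(d / (9/2)) * L^2 \<le> (d / (9/2)) * ((9/4) * r^2)"
    using h2 d by (intro mult_left_mono) auto
  have h4: "5 * r \<le> d * r^2"
  proof -
    have "5 \<le> d * r" using r5 d by (simp add: field_simps)
    then have "5 * r \<le> (d * r) * r" using r0 by (intro mult_right_mono) auto
    then show ?thesis by (simp add: power2_eq_square algebra_simps)
  qed
  have e: "(r - 1)^2 + r * (r - 1) / 2 = 3/2 * r^2 - 5/2 * r + 1" by (simp add: power2_eq_square field_simps)
  show ?thesis unfolding e using h1 h3 h4 q by (simp add: field_simps)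
qed

lemma even_div2_real: "even k \<Longrightarrow> real (k div 2) = real k / 2"
  by (elim evenE) simp

lemma asym:
  fixes \<epsilon> :: real assumes eps: "\<epsilon> > 0"
  shows "\<exists>c>0. \<forall>\<^sub>F n in sequentially. 3 \<le> r_star \<epsilon> n \<and>
     real (n choose r_star \<epsilon> n) * (fact (r_star \<epsilon> n) / (2 ^ ((r_star \<epsilon> n - 1)^2) * 2 ^ (r_star \<epsilon> n * (r_star \<epsilon> n - 1) div 2)))
       \<le> exp (- c * \<epsilon> * (ln (real n))^2)"
proof -
  define q where "q = 1 / (2/3 + \<epsilon>)"
  define d where "d = 3/2 - q"
  have qpos: "q > 0" unfolding q_def using eps by simp
  have dpos: "d > 0" unfolding d_def q_def using eps by (simp add: field_simps)
  define c where "c = d / (9/2 * \<epsilon> * ln 2)"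
  have cpos: "c > 0" unfolding c_def using dpos eps by simp
  have ceps: "c * \<epsilon> * ln 2 = d / (9/2)" unfolding c_def using eps by (simp add: field_simps)
  define K where "K = 3/2 * max 3 (5/d)"
  have K0: "K \<ge> 0" unfolding K_def by simp
  define N where "N = max 2 (nat \<lceil>2 powr K\<rceil>)"
  have ev: "3 \<le> r_star \<epsilon> n \<and>
     real (n choose r_star \<epsilon> n) * (fact (r_star \<epsilon> n) / (2 ^ ((r_star \<epsilon> n - 1)^2) * 2 ^ (r_star \<epsilon> n * (r_star \<epsilon> n - 1) div 2)))
       \<le> exp (- c * \<epsilon> * (ln (real n))^2)" if nN: "n \<ge> N" for n
  proof -
    have n2: "n \<ge> 2" using nN unfolding N_def by simp
    have npos: "real n > 0" using n2 by simp
    have nK: "2 powr K \<le> real n"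
    proof -
      have "2 powr K \<le> real (nat \<lceil>2 powr K\<rceil>)" by linarith
      also have "\<dots> \<le> real n"
      proof (rule of_nat_mono)
        show "nat \<lceil>2 powr K\<rceil> \<le> n" using nN unfolding N_def by (rule max.boundedE)
      qed
      finally show ?thesis .
    qed
    define L where "L = log 2 (real n)"
    have "log 2 (2 powr K) \<le> L" unfolding L_def using nK npos by (subst log_le_cancel_iff) auto
    then have LK: "K \<le> L" by (simp add: log_powr_cancel)
    have L0: "L \<ge> 0" using LK K0 by simp
    define r where "r = r_star \<epsilon> n"
    have x0: "(2/3 + \<epsilon>) * L \<ge> 0" using L0 eps by simp
    have rge: "(2/3 + \<epsilon>) * L \<le> real r"
    proof -
      have "real r = real_of_int \<lceil>(2/3 + \<epsilon>) * L\<rceil>"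
        unfolding r_def r_star_def L_def[symmetric] using x0 by simp
      then show ?thesis by linarith
    qed
    have r23: "(2/3) * L \<le> real r" using rge eps L0 by (smt (verit) mult_right_mono)
    have "max 3 (5/d) \<le> real r" using r23 LK unfolding K_def by linarith
    then have r3: "3 \<le> real r" and r5: "5 / d \<le> real r" by auto
    have r3n: "3 \<le> r" using r3 by simp
    have Lq: "L \<le> q * real r" using rge eps unfolding q_def by (simp add: field_simps)
    have ar: "real r * L + (d / (9/2)) * L^2 \<le> (real r - 1)^2 + real r * (real r - 1) / 2"
      by (rule asym_arith[OF dpos _ qpos L0 Lq r5 r3]) (simp add: d_def)
    define A where "A = (r - 1)^2"
    define B where "B = r * (r - 1) div 2"
    have Ar: "real A = (real r - 1)^2" unfolding A_def using r3n by (simp add: of_nat_diff)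
    have "even (r * (r - 1))" by (cases r) auto
    then have Br: "real B = real r * (real r - 1) / 2" unfolding B_def using r3n
      by (simp add: even_div2_real of_nat_diff)
    have binom: "real (n choose r) * fact r \<le> real n ^ r"
      using binomial_fact_pow[of n r] by (metis of_nat_fact of_nat_le_iff of_nat_mult of_nat_power)
    have pos2: "(0::real) < 2 ^ A * 2 ^ B" by simp
    have "real (n choose r) * (fact r / (2 ^ A * 2 ^ B)) = real (n choose r) * fact r / (2 ^ A * 2 ^ B)" by simp
    also have "\<dots> \<le> real n ^ r / (2 ^ A * 2 ^ B)" using binom pos2 by (intro divide_right_mono) auto
    finally have step1: "real (n choose r) * (fact r / (2 ^ A * 2 ^ B)) \<le> real n ^ r / (2 ^ A * 2 ^ B)" .
    have e1: "real n ^ r = exp (real r * ln (real n))" using npos by (simp add: exp_of_nat_mult)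
    have e2: "(2::real) ^ A = exp (real A * ln 2)" by (simp add: exp_of_nat_mult)
    have e3: "(2::real) ^ B = exp (real B * ln 2)" by (simp add: exp_of_nat_mult)
    have e4: "exp (real r * ln (real n)) / (exp (real A * ln 2) * exp (real B * ln 2))
        = exp (real r * ln (real n) - real A * ln 2 - real B * ln 2)" by (simp add: exp_diff exp_add)
    have "exp (real r * ln (real n) - real A * ln 2 - real B * ln 2) \<le> exp (- c * \<epsilon> * (ln (real n))^2)"
    proof (rule exp_mono)
      have lnn: "ln (real n) = L * ln 2" unfolding L_def log_def by simp
      have l2: "ln (2::real) > 0" by simp
      have "(real r * L + (d / (9/2)) * L^2) * ln 2 \<le> ((real r - 1)^2 + real r * (real r - 1) / 2) * ln 2"
        using ar l2 by (intro mult_right_mono) auto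
      then have h: "real r * L * ln 2 + (d / (9/2)) * L^2 * ln 2 \<le> ((real r - 1)^2 + real r * (real r - 1) / 2) * ln 2"
        by (simp add: algebra_simps)
      have kk: "c * \<epsilon> * (L * ln 2)^2 = (c * \<epsilon> * ln 2) * L^2 * ln 2" by (simp add: power2_eq_square algebra_simps)
      have "real r * (L * ln 2) - (real r - 1)^2 * ln 2 - real r * (real r - 1) / 2 * ln 2 \<le> - (c * \<epsilon> * (L * ln 2)^2)"
        unfolding kk ceps using h by (simp add: algebra_simps)
      then show "real r * ln (real n) - real A * ln 2 - real B * ln 2 \<le> - c * \<epsilon> * (ln (real n))^2"
        unfolding lnn Ar Br by simp
    qed
    then have "real n ^ r / (2 ^ A * 2 ^ B) \<le> exp (- c * \<epsilon> * (ln (real n))^2)"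
      unfolding e1 e2 e3 e4 .
    with step1 have "real (n choose r) * (fact r / (2 ^ A * 2 ^ B)) \<le> exp (- c * \<epsilon> * (ln (real n))^2)"
      by (rule order.trans)
    then show ?thesis using r3n unfolding r_def A_def B_def by simp
  qed
  show ?thesis
    by (rule exI[of _ c], rule conjI[OF cpos], subst eventually_sequentially) (use ev in blast)
qed



lemma pair_supports:
  fixes f :: "nat \<Rightarrow> nat \<Rightarrow> real"
  assumes ij: "i \<noteq> j" and sym: "f j i = f i j" and a: "f i j > f i i" and b: "f i j > f j j"
  shows "supports_nontrivial_local_eq f {i, j}"
proof -
  define Dn where "Dn = 2 * f i j - f i i - f j j"
  have Dp: "Dn > 0" unfolding Dn_def using a b by simp
  define p where "p k = (if k = i then (f i j - f j j) / Dn else (f i j - f i i) / Dn)" for k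
  have pi: "p i = (f i j - f j j) / Dn" unfolding p_def by simp
  have pj: "p j = (f i j - f i i) / Dn" unfolding p_def using ij by simp
  have c2: "card {i, j} \<ge> 2" using ij by simp
  have "p i > 0" unfolding pi using b Dp by (intro divide_pos_pos) auto
  moreover have "p j > 0" unfolding pj using a Dp by (intro divide_pos_pos) auto
  ultimately have pos: "\<forall>k\<in>{i, j}. p k > 0" by auto
  have sum1: "(\<Sum>k\<in>{i, j}. p k) = 1"
  proof -
    have "(\<Sum>k\<in>{i, j}. p k) = p i + p j" using ij by simp
    also have "\<dots> = ((f i j - f j j) + (f i j - f i i)) / Dn" unfolding pi pj by (rule add_divide_distrib[symmetric])
    also have "(f i j - f j j) + (f i j - f i i) = Dn" unfolding Dn_def by simp
    also have "Dn / Dn = 1" using Dp by simp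
    finally show ?thesis .
  qed
  have eqv: "\<forall>k\<in>{i, j}. (\<Sum>l\<in>{i, j}. f k l * p l) = f i i * p i + f i j * p j"
  proof
    fix k assume k: "k \<in> {i, j}"
    have sj: "f j i * p i + f j j * p j = f i i * p i + f i j * p j"
      unfolding pi pj sym using Dp by (simp add: Dn_def field_simps)
    show "(\<Sum>l\<in>{i, j}. f k l * p l) = f i i * p i + f i j * p j"
      using k ij sj by auto
  qed
  have quad: "\<forall>x :: nat \<Rightarrow> real. (\<Sum>k\<in>{i, j}. x k) = 0 \<longrightarrow> (\<Sum>k\<in>{i, j}. \<Sum>l\<in>{i, j}. f k l * x k * x l) \<le> 0"
  proof (intro allI impI)
    fix x :: "nat \<Rightarrow> real" assume "(\<Sum>k\<in>{i, j}. x k) = 0"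
    then have xj: "x j = - x i" using ij by simp
    have "(\<Sum>k\<in>{i, j}. \<Sum>l\<in>{i, j}. f k l * x k * x l)
        = f i i * x i * x i + f i j * x i * x j + f j i * x j * x i + f j j * x j * x j"
      using ij by simp
    also have "\<dots> = (f i i + f j j - 2 * f i j) * (x i)^2"
      unfolding xj sym by (simp add: power2_eq_square algebra_simps)
    also have "\<dots> \<le> 0" using a b by (intro mult_nonpos_nonneg) auto
    finally show "(\<Sum>k\<in>{i, j}. \<Sum>l\<in>{i, j}. f k l * x k * x l) \<le> 0" .
  qed
  show ?thesis unfolding supports_nontrivial_local_eq_def using c2 pos sum1 eqv quad by blast
qed


context
  fixes g F :: "real \<Rightarrow> real"
  assumes g_pos: "\<And>x. x \<in> {0..1} \<Longrightarrow> g x > 0"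
    and g_antimono: "antimono_on {0..1} g"
    and g_diff: "g differentiable_on {0..1}"
    and g_int: "(g has_integral 1) {0..1}"
    and F_def: "\<And>x. x \<in> {0..1} \<Longrightarrow> F x = integral {0..x} g"
begin

lemma g_cont: "continuous_on {0..1} g"
  using g_diff by (rule differentiable_imp_continuous_on)

lemma g_meas: "(\<lambda>x. ennreal (g x * indicator {0..1} x)) \<in> borel_measurable borel"
proof -
  have "(\<lambda>x. indicator {0..1} x *\<^sub>R g x) \<in> borel_measurable borel"
    by (rule borel_measurable_continuous_on_indicator) (auto simp: g_cont)
  then have h: "(\<lambda>x. g x * indicator {0..1} x) \<in> borel_measurable borel" by (simp add: mult.commute)
  show ?thesis using h by measurable
qed

lemma g_meas_l: "(\<lambda>x. ennreal (g x * indicator {0..1} x)) \<in> borel_measurable lborel"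
  unfolding measurable_lborel2 by (rule g_meas)

lemma g_integrable: "0 \<le> a \<Longrightarrow> b \<le> 1 \<Longrightarrow> g integrable_on {a..b}"
  by (rule integrable_on_subinterval[OF has_integral_integrable[OF g_int]]) auto

lemma F_diff: assumes "0 \<le> a" "a \<le> b" "b \<le> 1" shows "F b - F a = integral {a..b} g"
proof -
  have "integral {0..a} g + integral {a..b} g = integral {0..b} g"
    using assms by (intro Henstock_Kurzweil_Integration.integral_combine g_integrable) auto
  then show ?thesis using assms F_def by auto
qed

lemma dens_interval:
  assumes "0 \<le> a" "a \<le> b" "b \<le> 1"
  shows "emeasure (dens_measure g) {a..b} = ennreal (F b - F a)"
proof -
  have "emeasure (dens_measure g) {a..b} = (\<integral>\<^sup>+x. ennreal (g x * indicator {0..1} x) * indicator {a..b} x \<partial>lborel)"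
    unfolding dens_measure_def by (subst emeasure_density[OF g_meas_l]) auto
  also have "\<dots> = (\<integral>\<^sup>+x. ennreal (indicator {a..b} x * g x) \<partial>lborel)"
    using assms by (intro nn_integral_cong) (auto simp: indicator_def)
  also have "\<dots> = ennreal (integral {a..b} g)"
    using assms g_pos by (intro nn_integral_has_integral_lebesgue integrable_integral g_integrable) 
      (auto intro: less_imp_le)
  finally show ?thesis using F_diff assms by simp
qed

lemma dens_prob: "prob_space (dens_measure g)"
proof
  have "emeasure (dens_measure g) UNIV = (\<integral>\<^sup>+x. ennreal (g x * indicator {0..1} x) * indicator UNIV x \<partial>lborel)"
    unfolding dens_measure_def by (subst emeasure_density[OF g_meas_l]) auto
  also have "\<dots> = (\<integral>\<^sup>+x. ennreal (indicator {0..1} x * g x) \<partial>lborel)"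
    by (intro nn_integral_cong) (auto simp: indicator_def)
  also have "\<dots> = ennreal 1"
    using g_pos by (intro nn_integral_has_integral_lebesgue g_int) (auto intro: less_imp_le)
  finally show "emeasure (dens_measure g) (space (dens_measure g)) = 1"
    by (simp add: dens_measure_def)
qed

lemma dens_AE: "AE x in dens_measure g. x \<in> {0..1}"
  unfolding dens_measure_def
  by (rule AE_density[OF g_meas_l, THEN iffD2]) (auto simp: indicator_def intro!: AE_I2)

lemma F_range: "x \<in> {0..1} \<Longrightarrow> 0 \<le> F x \<and> F x \<le> 1"
proof -
  assume x: "x \<in> {0..1}"
  have "F x = integral {0..x} g" using F_def x by simp
  also have "\<dots> \<ge> 0" using x g_pos
    by (intro integral_nonneg g_integrable) (auto intro: less_imp_le)
  finally have "0 \<le> F x" .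
  moreover have "F 1 - F x = integral {x..1} g" using x by (intro F_diff) auto
  moreover have "integral {x..1} g \<ge> 0" using x g_pos
    by (intro integral_nonneg g_integrable) (auto intro: less_imp_le)
  moreover have "F 1 = 1" using F_def[of 1] g_int by (simp add: integral_unique)
  ultimately show ?thesis by linarith
qed

lemma F_mono: "0 \<le> a \<Longrightarrow> a \<le> b \<Longrightarrow> b \<le> 1 \<Longrightarrow> F a \<le> F b"
proof -
  assume ab: "0 \<le> a" "a \<le> b" "b \<le> 1"
  have "0 \<le> integral {a..b} g" using ab g_pos
    by (intro integral_nonneg g_integrable) (auto intro: less_imp_le)
  then show ?thesis using F_diff[OF ab] by simp
qed

lemma F_mid_aux:
  assumes "0 \<le> a" "a \<le> b" "b \<le> 1"
  shows "F b - F ((a + b) / 2) \<le> (F b - F a) / 2"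
proof -
  define m where "m = (a + b) / 2"
  have am: "a \<le> m" "m \<le> b" using assms unfolding m_def by auto
  have gle: "g x \<le> g m" if "x \<in> {m..b}" for x
    using that am assms g_antimono unfolding monotone_on_def by auto
  have gge: "g m \<le> g x" if "x \<in> {a..m}" for x
    using that am assms g_antimono unfolding monotone_on_def by auto
  have "F b - F m = integral {m..b} g" using am assms by (intro F_diff) auto
  also have "\<dots> \<le> integral {m..b} (\<lambda>_. g m)"
    using am assms gle by (intro integral_le g_integrable) auto
  also have "\<dots> = g m * (b - m)" using am by simp
  finally have 1: "F b - F m \<le> g m * (b - m)" .
  have "g m * (m - a) = integral {a..m} (\<lambda>_. g m)" using am by simp
  also have "\<dots> \<le> integral {a..m} g"
    using am assms gge by (intro integral_le g_integrable) auto
  also have "\<dots> = F m - F a" using am assms by (intro F_diff[symmetric]) auto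
  finally have 2: "g m * (m - a) \<le> F m - F a" .
  have eq: "b - m = m - a" unfolding m_def by (simp add: field_simps)
  from 1 have "F b - F m \<le> g m * (m - a)" by (simp only: eq)
  then have "F b - F m \<le> F m - F a" using 2 by (rule order.trans)
  then have "F b - F m \<le> (F b - F a) / 2" by (simp add: field_simps)
  then show ?thesis unfolding m_def .
qed

lemma F_mid:
  assumes "a \<in> {0..1}" "b \<in> {0..1}"
  shows "F (max a b) - F ((a + b) / 2) \<le> \<bar>F a - F b\<bar> / 2"
proof (cases "a \<le> b")
  case True
  have "0 \<le> integral {a..b} g" using assms True g_pos
    by (intro integral_nonneg g_integrable) (auto intro: less_imp_le)
  then have "F a \<le> F b" using F_diff[of a b] assms True by auto
  have h: "F b - F ((a + b) / 2) \<le> (F b - F a) / 2" by (rule F_mid_aux) (use assms True in auto)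
  have e1: "max a b = b" using True by simp
  have e2: "\<bar>F a - F b\<bar> = F b - F a" using \<open>F a \<le> F b\<close> by simp
  show ?thesis unfolding e1 e2 by (rule h)
next
  case False
  have "0 \<le> integral {b..a} g" using assms False g_pos
    by (intro integral_nonneg g_integrable) (auto intro: less_imp_le)
  then have "F b \<le> F a" using F_diff[of b a] assms False by auto
  have h: "F a - F ((b + a) / 2) \<le> (F a - F b) / 2" by (rule F_mid_aux) (use assms False in auto)
  have e1: "max a b = a" using False by simp
  have e2: "\<bar>F a - F b\<bar> = F a - F b" using \<open>F b \<le> F a\<close> by simp
  have e3: "(a + b) / 2 = (b + a) / 2" by simp
  show ?thesis unfolding e1 e2 e3 by (rule h)
qed


lemma pps: "product_prob_space (\<lambda>_::nat\<times>nat. dens_measure g)"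
  unfolding product_prob_space_def product_prob_space_axioms_def product_sigma_finite_def
  using dens_prob by (simp add: prob_space_imp_sigma_finite)

definition Ev :: "nat \<Rightarrow> nat set \<Rightarrow> (nat \<times> nat \<Rightarrow> real) set" where
  "Ev n I = {\<omega> \<in> space (sample_space g n). \<forall>i\<in>I. \<forall>j\<in>I. i < j \<longrightarrow>
      (\<omega> (i,i) + \<omega> (j,j)) / 2 \<le> \<omega> (i,j) \<and> \<omega> (i,j) \<le> max (\<omega> (i,i)) (\<omega> (j,j))}"

lemma Ev_sets: assumes "finite I" shows "Ev n I \<in> sets (sample_space g n)"
proof -
  have "Measurable.pred (sample_space g n) (\<lambda>\<omega>. \<forall>i\<in>I. \<forall>j\<in>I. i < j \<longrightarrow>
      (\<omega> (i,i) + \<omega> (j,j)) / 2 \<le> \<omega> (i,j) \<and> \<omega> (i,j) \<le> max (\<omega> (i,i)) (\<omega> (j,j)))"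
    apply (rule pred_intros_finite(3)[OF assms])
    apply (rule pred_intros_finite(3)[OF assms])
    apply (rule pred_intros_imp')
    apply (rule pred_intros_logic(3))
    unfolding pred_def
    apply (rule borel_measurable_le)
    apply (intro borel_measurable_divide borel_measurable_add coord_meas borel_measurable_const)
    apply (rule coord_meas)
    apply (rule borel_measurable_le)
    apply (rule coord_meas)
    apply (intro borel_measurable_max coord_meas)
    done
  then show ?thesis unfolding Ev_def pred_def .
qed

lemma Ev_bound:
  assumes I: "I \<subseteq> {..<n}"
  shows "emeasure (sample_space g n) (Ev n I)
     \<le> ennreal (fact (card I) / (2 ^ ((card I - 1)^2) * 2 ^ (card I * (card I - 1) div 2)))"
proof -
  define M where "M = (\<lambda>_::nat\<times>nat. dens_measure g)"
  define D where "D = (\<lambda>i. (i,i)) ` I"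
  define R where "R = pair_index n - D"
  define Bnd :: real where "Bnd = fact (card I) / (2 ^ ((card I - 1)^2) * 2 ^ (card I * (card I - 1) div 2))"
  have finI: "finite I" using I finite_subset by blast
  have finP: "finite (pair_index n)"
    unfolding pair_index_def by (rule finite_subset[of _ "{..<n} \<times> {..<n}"]) auto
  have DP: "D \<subseteq> pair_index n" unfolding D_def pair_index_def using I by auto
  have finD: "finite D" using finI unfolding D_def by simp
  have finR: "finite R" using finP unfolding R_def by simp
  have DR: "D \<inter> R = {}" unfolding R_def by auto
  have DRU: "D \<union> R = pair_index n" unfolding R_def using DP by auto
  interpret P: product_prob_space M D unfolding M_def by (rule pps)
  have probR: "prob_space (PiM R M)" by (rule prob_space_PiM) (simp add: M_def dens_prob)
  have sfR: "sigma_finite_measure (PiM R M)" using probR by (rule prob_space_imp_sigma_finite)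
  have probD: "prob_space (PiM D M)" by (rule prob_space_PiM) (simp add: M_def dens_prob)
  have SS: "sample_space g n = PiM (D \<union> R) M" unfolding sample_space_def M_def DRU ..
  have Emeas: "Ev n I \<in> sets (PiM (D \<union> R) M)" using Ev_sets[OF finI, of n] SS by simp
  have X: "merge D R -` Ev n I \<inter> space (PiM D M \<Otimes>\<^sub>M PiM R M) \<in> sets (PiM D M \<Otimes>\<^sub>M PiM R M)"
    by (rule measurable_sets[OF measurable_merge Emeas])
  have "emeasure (sample_space g n) (Ev n I) = emeasure (distr (PiM D M \<Otimes>\<^sub>M PiM R M) (PiM (D \<union> R) M) (merge D R)) (Ev n I)"
    unfolding SS using P.distr_merge[OF DR finD finR] by simp
  also have "\<dots> = emeasure (PiM D M \<Otimes>\<^sub>M PiM R M) (merge D R -` Ev n I \<inter> space (PiM D M \<Otimes>\<^sub>M PiM R M))"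
    by (rule emeasure_distr[OF measurable_merge Emeas])
  also have "\<dots> = (\<integral>\<^sup>+x. emeasure (PiM R M) (Pair x -` (merge D R -` Ev n I \<inter> space (PiM D M \<Otimes>\<^sub>M PiM R M))) \<partial>PiM D M)"
    by (rule sigma_finite_measure.emeasure_pair_measure_alt[OF sfR X])
  also have "\<dots> \<le> (\<integral>\<^sup>+x. ennreal Bnd \<partial>PiM D M)"
  proof (rule nn_integral_mono_AE)
    have ae1: "AE x in PiM D M. \<forall>k\<in>D. x k \<in> {0..1}"
    proof (rule AE_finite_allI[OF finD])
      fix k assume "k \<in> D"
      show "AE x in PiM D M. x k \<in> {0..1}"
        by (rule P.AE_component[OF \<open>k \<in> D\<close>]) (unfold M_def, rule dens_AE)
    qed
    show "AE x in PiM D M. emeasure (PiM R M) (Pair x -` (merge D R -` Ev n I \<inter> space (PiM D M \<Otimes>\<^sub>M PiM R M))) \<le> ennreal Bnd"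
    proof -
      have ae2: "AE x in PiM D M. (\<forall>k\<in>D. x k \<in> {0..1}) \<and> x \<in> space (PiM D M)"
        using ae1 AE_space by (rule AE_conjI)
      show ?thesis
      proof (rule AE_mp[OF ae2])
      show "AE x in PiM D M. (\<forall>k\<in>D. x k \<in> {0..1}) \<and> x \<in> space (PiM D M) \<longrightarrow>
        emeasure (PiM R M) (Pair x -` (merge D R -` Ev n I \<inter> space (PiM D M \<Otimes>\<^sub>M PiM R M))) \<le> ennreal Bnd"
      proof (rule AE_I2, rule impI, elim conjE)
        fix x assume x01: "\<forall>k\<in>D. x k \<in> {0..1}" and xsp: "x \<in> space (PiM D M)"
        define lo where "lo k = (x (fst k, fst k) + x (snd k, snd k)) / 2" for k :: "nat \<times> nat"
        define hi where "hi k = max (x (fst k, fst k)) (x (snd k, snd k))" for k :: "nat \<times> nat"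
        define A where "A k = (if k \<in> Opairs I then {lo k..hi k} else UNIV)" for k
        define u where "u i = F (x (i, i))" for i
        have OR: "Opairs I \<subseteq> R" unfolding Opairs_def R_def D_def pair_index_def using I by auto
        have xr: "x (i, i) \<in> {0..1}" if "i \<in> I" for i using x01 that unfolding D_def by auto
        have sub: "Pair x -` (merge D R -` Ev n I \<inter> space (PiM D M \<Otimes>\<^sub>M PiM R M)) \<subseteq> PiE R A"
        proof
          fix y assume y: "y \<in> Pair x -` (merge D R -` Ev n I \<inter> space (PiM D M \<Otimes>\<^sub>M PiM R M))"
          then have ysp: "y \<in> space (PiM R M)" and yE: "merge D R (x, y) \<in> Ev n I"
            using xsp by (auto simp: space_pair_measure)
          have ext: "y \<in> extensional R" using ysp by (simp add: space_PiM PiE_def)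
          show "y \<in> PiE R A"
          proof (rule PiE_I)
            fix k assume kR: "k \<in> R"
            show "y k \<in> A k"
            proof (cases "k \<in> Opairs I")
              case True
              then obtain i j where k: "k = (i, j)" and ij: "i \<in> I" "j \<in> I" "i < j"
                unfolding Opairs_def by auto
              have "(i, i) \<in> D" "(j, j) \<in> D" using ij unfolding D_def by auto
              moreover have "(i, j) \<notin> D" using ij unfolding D_def by auto
              moreover have "(i, j) \<in> R" using kR k by simp
              ultimately have m1: "merge D R (x, y) (i, i) = x (i, i)" "merge D R (x, y) (j, j) = x (j, j)"
                "merge D R (x, y) (i, j) = y (i, j)" by (auto simp: merge_def)
              have "(merge D R (x, y) (i,i) + merge D R (x, y) (j,j)) / 2 \<le> merge D R (x, y) (i,j) \<and>
                  merge D R (x, y) (i,j) \<le> max (merge D R (x, y) (i,i)) (merge D R (x, y) (j,j))"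
                using yE ij unfolding Ev_def by blast
              then show ?thesis unfolding m1 A_def lo_def hi_def k using True k by simp
            next
              case False
              then show ?thesis unfolding A_def by simp
            qed
          next
            fix k assume "k \<notin> R" then show "y k = undefined" by (rule extensional_arb[OF ext])
          qed
        qed
        have Asets: "A k \<in> sets (M k)" for k unfolding A_def M_def dens_measure_def by simp
        have "emeasure (PiM R M) (Pair x -` (merge D R -` Ev n I \<inter> space (PiM D M \<Otimes>\<^sub>M PiM R M)))
            \<le> emeasure (PiM R M) (PiE R A)"
          by (rule emeasure_mono[OF sub]) (rule sets_PiM_I_finite[OF finR Asets])
        also have "\<dots> = (\<Prod>k\<in>R. emeasure (M k) (A k))"
          by (rule P.emeasure_PiM[OF finR Asets])
        also have "\<dots> = (\<Prod>k\<in>Opairs I. ennreal (F (hi k) - F (lo k)))"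
        proof (rule prod.mono_neutral_cong_right[OF finR OR])
          show "\<forall>k\<in>R - Opairs I. emeasure (M k) (A k) = 1"
            using prob_space.emeasure_space_1[OF dens_prob] unfolding A_def M_def
            by (simp add: dens_measure_def)
        next
          fix k assume k: "k \<in> Opairs I"
          then obtain i j where kk: "k = (i, j)" and ij: "i \<in> I" "j \<in> I" "i < j"
            unfolding Opairs_def by auto
          have "0 \<le> lo k" "lo k \<le> hi k" "hi k \<le> 1"
            using xr[OF ij(1)] xr[OF ij(2)] unfolding lo_def hi_def kk by auto
          then show "emeasure (M k) (A k) = ennreal (F (hi k) - F (lo k))"
            unfolding M_def A_def using k by (simp add: dens_interval)
        qed
        also have "\<dots> = ennreal (\<Prod>k\<in>Opairs I. F (hi k) - F (lo k))"
        proof (rule prod_ennreal)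
          fix k assume k: "k \<in> Opairs I"
          then obtain i j where kk: "k = (i, j)" and ij: "i \<in> I" "j \<in> I" "i < j"
            unfolding Opairs_def by auto
          have "0 \<le> lo k" "lo k \<le> hi k" "hi k \<le> 1"
            using xr[OF ij(1)] xr[OF ij(2)] unfolding lo_def hi_def kk by auto
          then show "0 \<le> F (hi k) - F (lo k)" using F_mono by auto
        qed
        also have "\<dots> \<le> ennreal (\<Prod>p\<in>Opairs I. \<bar>u (fst p) - u (snd p)\<bar> / 2)"
        proof (rule ennreal_leI, rule prod_mono)
          fix k assume k: "k \<in> Opairs I"
          then obtain i j where kk: "k = (i, j)" and ij: "i \<in> I" "j \<in> I" "i < j"
            unfolding Opairs_def by auto
          have "0 \<le> lo k" "lo k \<le> hi k" "hi k \<le> 1"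
            using xr[OF ij(1)] xr[OF ij(2)] unfolding lo_def hi_def kk by auto
          then have "0 \<le> F (hi k) - F (lo k)" using F_mono by auto
          moreover have "F (hi k) - F (lo k) \<le> \<bar>u (fst k) - u (snd k)\<bar> / 2"
            unfolding lo_def hi_def u_def kk using F_mid xr[OF ij(1)] xr[OF ij(2)] by simp
          ultimately show "0 \<le> F (hi k) - F (lo k) \<and> F (hi k) - F (lo k) \<le> \<bar>u (fst k) - u (snd k)\<bar> / 2"
            by simp
        qed
        also have "\<dots> \<le> ennreal Bnd"
          unfolding Bnd_def using F_range xr unfolding u_def by (intro ennreal_leI pair_prod_bound finI) auto
        finally show "emeasure (PiM R M) (Pair x -` (merge D R -` Ev n I \<inter> space (PiM D M \<Otimes>\<^sub>M PiM R M))) \<le> ennreal Bnd" .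
      qed
    qed
    qed
  qed
  also have "\<dots> = ennreal Bnd" using probD by (simp add: prob_space.emeasure_space_1)
  finally show ?thesis unfolding Bnd_def .
qed


lemma bad_subset:
  assumes r3: "3 \<le> r_star \<epsilon> n"
  shows "{\<omega> \<in> space (sample_space g n). bad_event \<epsilon> n \<omega>}
    \<subseteq> (\<Union>I\<in>{I. I \<subseteq> {..<n} \<and> card I = r_star \<epsilon> n}. Ev n I)"
proof
  fix \<omega> assume "\<omega> \<in> {\<omega> \<in> space (sample_space g n). bad_event \<epsilon> n \<omega>}"
  then have sp: "\<omega> \<in> space (sample_space g n)" and bad: "bad_event \<epsilon> n \<omega>" by auto
  from bad obtain I where I: "I \<subseteq> {..<n}" and K: "K_set (payoff \<omega>) I" and cI: "r_star \<epsilon> n \<le> card I"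
    and nJ: "\<not> (\<exists>J. J \<subset> I \<and> card J \<ge> 2 \<and> supports_nontrivial_local_eq (payoff \<omega>) J)"
    unfolding bad_event_def by blast
  obtain I' where I'I: "I' \<subseteq> I" and cI': "card I' = r_star \<epsilon> n" and fI': "finite I'"
    using obtain_subset_with_card_n[OF cI] by metis
  have "\<omega> \<in> Ev n I'"
    unfolding Ev_def
  proof (intro CollectI conjI sp ballI impI)
    fix i j assume i: "i \<in> I'" and j: "j \<in> I'" and ij: "i < j"
    have p1: "payoff \<omega> i j = \<omega> (i, j)" "payoff \<omega> j i = \<omega> (i, j)"
      "payoff \<omega> i i = \<omega> (i, i)" "payoff \<omega> j j = \<omega> (j, j)"
      unfolding payoff_def using ij by auto
    have "payoff \<omega> i j \<ge> (payoff \<omega> i i + payoff \<omega> j j) / 2"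
    proof -
      have "i \<in> I" "j \<in> I" "i \<noteq> j" using i j ij I'I by auto
      then show ?thesis using K unfolding K_set_def by blast
    qed
    then show "(\<omega> (i, i) + \<omega> (j, j)) / 2 \<le> \<omega> (i, j)" unfolding p1 .
    show "\<omega> (i, j) \<le> max (\<omega> (i, i)) (\<omega> (j, j))"
    proof (rule ccontr)
      assume "\<not> \<omega> (i, j) \<le> max (\<omega> (i, i)) (\<omega> (j, j))"
      then have a: "payoff \<omega> i j > payoff \<omega> i i" and b: "payoff \<omega> i j > payoff \<omega> j j"
        unfolding p1 by auto
      have sup: "supports_nontrivial_local_eq (payoff \<omega>) {i, j}"
        using ij a b p1 by (intro pair_supports) auto
      have sub: "{i, j} \<subset> I"
      proof -
        have "{i, j} \<subseteq> I" using i j I'I by auto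
        moreover have "card {i, j} < card I" using ij r3 cI by simp
        ultimately show ?thesis by auto
      qed
      have "card {i, j} \<ge> 2" using ij by simp
      then show False using nJ sub sup by blast
    qed
  qed
  moreover have "I' \<in> {I. I \<subseteq> {..<n} \<and> card I = r_star \<epsilon> n}" using I'I I cI' by auto
  ultimately show "\<omega> \<in> (\<Union>I\<in>{I. I \<subseteq> {..<n} \<and> card I = r_star \<epsilon> n}. Ev n I)" by blast
qed

lemma bad_bound:
  assumes r3: "3 \<le> r_star \<epsilon> n"
  shows "measure (sample_space g n) {\<omega> \<in> space (sample_space g n). bad_event \<epsilon> n \<omega>}
    \<le> real (n choose r_star \<epsilon> n) * (fact (r_star \<epsilon> n) /
        (2 ^ ((r_star \<epsilon> n - 1)^2) * 2 ^ (r_star \<epsilon> n * (r_star \<epsilon> n - 1) div 2)))"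
proof -
  define r where "r = r_star \<epsilon> n"
  define Bnd :: real where "Bnd = fact r / (2 ^ ((r - 1)^2) * 2 ^ (r * (r - 1) div 2))"
  define II where "II = {I. I \<subseteq> {..<n} \<and> card I = r}"
  have finII: "finite II" unfolding II_def by (rule finite_subset[of _ "Pow {..<n}"]) auto
  have cII: "card II = n choose r" unfolding II_def using n_subsets[of "{..<n}" r] by simp
  have prob: "prob_space (sample_space g n)" unfolding sample_space_def
    by (rule prob_space_PiM) (rule dens_prob)
  have Esets: "Ev n I \<in> sets (sample_space g n)" if "I \<in> II" for I
    using that unfolding II_def by (intro Ev_sets) (auto intro: finite_subset)
  have "emeasure (sample_space g n) {\<omega> \<in> space (sample_space g n). bad_event \<epsilon> n \<omega>}
      \<le> emeasure (sample_space g n) (\<Union>I\<in>II. Ev n I)"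
    using bad_subset[OF r3] unfolding II_def r_def
    by (intro emeasure_mono) (auto intro!: sets.finite_UN simp: finII[unfolded II_def r_def] Esets[unfolded II_def r_def])
  also have "\<dots> \<le> (\<Sum>I\<in>II. emeasure (sample_space g n) (Ev n I))"
    using Esets finII by (intro emeasure_subadditive_finite) auto
  also have "\<dots> \<le> (\<Sum>I\<in>II. ennreal Bnd)"
  proof (rule sum_mono)
    fix I assume "I \<in> II"
    then have "I \<subseteq> {..<n}" "card I = r" unfolding II_def by auto
    then show "emeasure (sample_space g n) (Ev n I) \<le> ennreal Bnd"
      using Ev_bound[of I n] unfolding Bnd_def by simp
  qed
  also have "\<dots> = of_nat (card II) * ennreal Bnd" by simp
  also have "\<dots> = ennreal (real (n choose r) * Bnd)"
  proof -
    have bnn: "0 \<le> Bnd" unfolding Bnd_def by simp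
    have "ennreal (real (n choose r) * Bnd) = ennreal (real (n choose r)) * ennreal Bnd"
      using bnn by (simp add: ennreal_mult)
    then show ?thesis using cII by (simp add: ennreal_of_nat_eq_real_of_nat)
  qed
  finally have "ennreal (measure (sample_space g n) {\<omega> \<in> space (sample_space g n). bad_event \<epsilon> n \<omega>})
      \<le> ennreal (real (n choose r) * Bnd)"
    using prob by (simp add: finite_measure.emeasure_eq_measure prob_space.finite_measure)
  moreover have "0 \<le> real (n choose r) * Bnd" unfolding Bnd_def by simp
  ultimately show ?thesis unfolding Bnd_def r_def by (simp add: ennreal_le_iff)
qed

lemma main_aux:
  assumes eps: "\<epsilon> > 0"
  shows "\<exists>c>0. \<forall>\<^sub>F n in sequentially.
           measure (sample_space g n) {\<omega> \<in> space (sample_space g n). \<not> bad_event \<epsilon> n \<omega>}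
             \<ge> 1 - exp (- c * \<epsilon> * (ln (real n))\<^sup>2)"
proof -
  obtain c where c: "c > 0" and ev: "\<forall>\<^sub>F n in sequentially. 3 \<le> r_star \<epsilon> n \<and>
     real (n choose r_star \<epsilon> n) * (fact (r_star \<epsilon> n) / (2 ^ ((r_star \<epsilon> n - 1)^2) * 2 ^ (r_star \<epsilon> n * (r_star \<epsilon> n - 1) div 2)))
       \<le> exp (- c * \<epsilon> * (ln (real n))^2)"
    using asym[OF eps] by blast
  have "\<forall>\<^sub>F n in sequentially.
           measure (sample_space g n) {\<omega> \<in> space (sample_space g n). \<not> bad_event \<epsilon> n \<omega>}
             \<ge> 1 - exp (- c * \<epsilon> * (ln (real n))\<^sup>2)"
    using ev
  proof (rule eventually_mono)
    fix n assume h: "3 \<le> r_star \<epsilon> n \<and>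
     real (n choose r_star \<epsilon> n) * (fact (r_star \<epsilon> n) / (2 ^ ((r_star \<epsilon> n - 1)^2) * 2 ^ (r_star \<epsilon> n * (r_star \<epsilon> n - 1) div 2)))
       \<le> exp (- c * \<epsilon> * (ln (real n))^2)"
    have prob: "prob_space (sample_space g n)" unfolding sample_space_def
      by (rule prob_space_PiM) (rule dens_prob)
    have eq: "{\<omega> \<in> space (sample_space g n). \<not> bad_event \<epsilon> n \<omega>}
        = space (sample_space g n) - {\<omega> \<in> space (sample_space g n). bad_event \<epsilon> n \<omega>}" by auto
    have "measure (sample_space g n) {\<omega> \<in> space (sample_space g n). \<not> bad_event \<epsilon> n \<omega>}
        = 1 - measure (sample_space g n) {\<omega> \<in> space (sample_space g n). bad_event \<epsilon> n \<omega>}"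
      unfolding eq by (rule prob_space.prob_compl[OF prob bad_meas])
    moreover have "measure (sample_space g n) {\<omega> \<in> space (sample_space g n). bad_event \<epsilon> n \<omega>}
        \<le> exp (- c * \<epsilon> * (ln (real n))^2)"
      using bad_bound[of \<epsilon> n] h by linarith
    ultimately show "measure (sample_space g n) {\<omega> \<in> space (sample_space g n). \<not> bad_event \<epsilon> n \<omega>}
             \<ge> 1 - exp (- c * \<epsilon> * (ln (real n))\<^sup>2)" by linarith
  qed
  then show ?thesis using c by blast
qed

end


theorem theorem2p11:
  fixes F g :: "real \<Rightarrow> real" and \<epsilon> :: real
  assumes g_pos: "\<And>x. x \<in> {0..1} \<Longrightarrow> g x > 0"
    and g_antimono: "antimono_on {0..1} g"
    and g_diff: "g differentiable_on {0..1}"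
    and g_int: "(g has_integral 1) {0..1}"
    and F_def: "\<And>x. x \<in> {0..1} \<Longrightarrow> F x = integral {0..x} g"
    and hazard_mono: "mono_on {0..<1} (\<lambda>x. g x / (1 - F x))"
    and eps: "\<epsilon> > 0"
  shows "\<exists>c>0. \<forall>\<^sub>F n in sequentially.
           measure (sample_space g n) {\<omega> \<in> space (sample_space g n). \<not> bad_event \<epsilon> n \<omega>}
             \<ge> 1 - exp (- c * \<epsilon> * (ln (real n))\<^sup>2)"
  by (rule main_aux[OF g_pos g_antimono g_diff g_int F_def eps])

end
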